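(* For any positive integers $r,k$, the set $D_{r,k}$ contains at least one non-zero integer.
   Context: For positive integers $v,b,r,k$, a $(v,b,r,k)$-configuration is a connected bipartite graph with $v$ vertices on one side, each of degree $r$, and $b$ vertices on the other side, each of degree $k$, containing no cycle of length $4$. By convention the empty graph (with $v=b=0$) is also regarded as a configuration. A tuple $(v,b,r,k)$ is configurable if a $(v,b,r,k)$-configuration exists. Let $\mathbb{N}_0=\{0,1,2,\dots\}$ and define $$D_{r,k}=\left\{d\in\mathbb{N}_0:\left(d\tfrac{k}{\gcd(r,k)},\,d\tfrac{r}{\gcd(r,k)},\,r,\,k\right)\text{ is configurable}\right\}.$$ *)

theory Defs
  imports Main
begin

text \<open>A bipartite graph is encoded by a set of points P (one side), a set of lines L
  (other side), both subsets of nat, and an incidence (edge) set I \<subseteq> P \<times> L.\<close>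

definition bip_adj :: "(nat \<times> nat) set \<Rightarrow> (nat + nat) rel" where
  "bip_adj I = {(x, y). \<exists>p l. (p, l) \<in> I \<and>
      ((x = Inl p \<and> y = Inr l) \<or> (x = Inr l \<and> y = Inl p))}"

definition bip_connected :: "nat set \<Rightarrow> nat set \<Rightarrow> (nat \<times> nat) set \<Rightarrow> bool" where
  "bip_connected P L I \<longleftrightarrow>
     (\<forall>x \<in> P <+> L. \<forall>y \<in> P <+> L. (x, y) \<in> (bip_adj I)\<^sup>*)"

definition no_4_cycle :: "(nat \<times> nat) set \<Rightarrow> bool" where
  "no_4_cycle I \<longleftrightarrow> \<not> (\<exists>p1 p2 l1 l2. p1 \<noteq> p2 \<and> l1 \<noteq> l2 \<and>
      (p1, l1) \<in> I \<and> (p1, l2) \<in> I \<and> (p2, l1) \<in> I \<and> (p2, l2) \<in> I)"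

definition is_configuration ::
  "nat set \<Rightarrow> nat set \<Rightarrow> (nat \<times> nat) set \<Rightarrow> nat \<Rightarrow> nat \<Rightarrow> nat \<Rightarrow> nat \<Rightarrow> bool" where
  "is_configuration P L I v b r k \<longleftrightarrow>
     finite P \<and> finite L \<and> card P = v \<and> card L = b \<and> I \<subseteq> P \<times> L \<and>
     (\<forall>p \<in> P. card {l. (p, l) \<in> I} = r) \<and>
     (\<forall>l \<in> L. card {p. (p, l) \<in> I} = k) \<and>
     bip_connected P L I \<and> no_4_cycle I"

text \<open>The empty graph (v = b = 0) counts as a configuration by convention.\<close>
definition configurable :: "nat \<Rightarrow> nat \<Rightarrow> nat \<Rightarrow> nat \<Rightarrow> bool" where
  "configurable v b r k \<longleftrightarrow> (v = 0 \<and> b = 0) \<or> (\<exists>P L I. is_configuration P L I v b r k)"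

definition D_set :: "nat \<Rightarrow> nat \<Rightarrow> nat set" where
  "D_set r k = {d. configurable (d * (k div gcd r k)) (d * (r div gcd r k)) r k}"

end

theory Submission
  imports Defs
begin

definition II :: "nat \<Rightarrow> nat \<Rightarrow> nat \<Rightarrow> (nat \<times> nat) set" where
  "II r k q = {(p,l). p < k*q \<and> l < r*q \<and> p div k = ((l mod r)*(p mod k) + l div r) mod q}"

lemma key:
  fixes a1 a2 i1 i2 b1 b2 q r k :: nat
  assumes "a1<r" "a2<r" "i1<k" "i2<k" "b1<q" "b2<q" "(r-1)*(k-1)<q"
    "(a1*i1+b1) mod q = (a2*i1+b2) mod q" "(a1*i2+b1) mod q = (a2*i2+b2) mod q" "i1\<noteq>i2"
  shows "a1=a2 \<and> b1=b2"
proof -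
  have d1: "int q dvd (int a1*int i1+int b1) - (int a2*int i1+int b2)"
    using assms(8) by (metis of_nat_add of_nat_mult mod_eq_dvd_iff zmod_int)
  have d2: "int q dvd (int a1*int i2+int b1) - (int a2*int i2+int b2)"
    using assms(9) by (metis of_nat_add of_nat_mult mod_eq_dvd_iff zmod_int)
  have "int q dvd ((int a1*int i1+int b1) - (int a2*int i1+int b2)) - ((int a1*int i2+int b1) - (int a2*int i2+int b2))"
    using d1 d2 by (rule dvd_diff)
  moreover have "((int a1*int i1+int b1) - (int a2*int i1+int b2)) - ((int a1*int i2+int b1) - (int a2*int i2+int b2))
      = (int a1 - int a2) * (int i1 - int i2)" by (simp add: algebra_simps)
  ultimately have dv: "int q dvd (int a1 - int a2) * (int i1 - int i2)" by simp
  have "\<bar>int a1 - int a2\<bar> \<le> int (r-1)" using assms by auto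
  moreover have "\<bar>int i1 - int i2\<bar> \<le> int (k-1)" using assms by auto
  ultimately have "\<bar>(int a1 - int a2) * (int i1 - int i2)\<bar> \<le> int (r-1) * int (k-1)"
    by (simp add: abs_mult mult_mono)
  also have "\<dots> < int q" using assms(7) by (metis of_nat_less_iff of_nat_mult)
  finally have lt: "\<bar>(int a1 - int a2) * (int i1 - int i2)\<bar> < int q" .
  have "(int a1 - int a2) * (int i1 - int i2) = 0"
  proof (rule ccontr)
    assume "(int a1 - int a2) * (int i1 - int i2) \<noteq> 0"
    from dvd_imp_le_int[OF this dv] lt show False by simp
  qed
  hence "a1 = a2" using assms(10) by simp
  moreover have "b1 = b2" using assms(8) \<open>a1 = a2\<close> assms(5,6)
    by (smt (verit, ccfv_SIG) add.assoc add_left_cancel mod_less nat_mod_eq_iff)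
  ultimately show ?thesis by simp
qed

lemma II_mem: "(p,l) \<in> II r k q \<longleftrightarrow> p < k*q \<and> l < r*q \<and> p div k = ((l mod r)*(p mod k) + l div r) mod q"
  by (simp add: II_def)

lemma conf:
  assumes r: "0<r" and k: "0<k" and q: "0<q" and rk: "(r-1)*(k-1)<q"
    and c: "q=1 \<or> (2\<le>r \<and> 2\<le>k)"
  shows "is_configuration {..<k*q} {..<r*q} (II r k q) (k*q) (r*q) r k"
proof -
  let ?I = "II r k q"
  have sub: "?I \<subseteq> {..<k*q} \<times> {..<r*q}" by (auto simp: II_def)
  have deg1: "card {l. (p, l) \<in> ?I} = r" if p: "p \<in> {..<k*q}" for p
  proof -
    define i x where "i = p mod k" and "x = p div k"
    have x: "x < q" using p k by (simp add: x_def less_mult_imp_div_less mult.commute)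
    have S: "{l. (p, l) \<in> ?I} = {l. l < r*q \<and> x = ((l mod r)*i + l div r) mod q}"
      using p by (auto simp: II_def i_def x_def)
    have "bij_betw (\<lambda>l. l mod r) {l. l < r*q \<and> x = ((l mod r)*i + l div r) mod q} {..<r}"
    proof (rule bij_betwI')
      fix l1 l2 assume l1: "l1 \<in> {l. l < r*q \<and> x = ((l mod r)*i + l div r) mod q}"
        and l2: "l2 \<in> {l. l < r*q \<and> x = ((l mod r)*i + l div r) mod q}"
      show "(l1 mod r = l2 mod r) = (l1 = l2)"
      proof
        assume e: "l1 mod r = l2 mod r"
        have b1: "l1 div r < q" using l1 r by (simp add: less_mult_imp_div_less mult.commute)
        have b2: "l2 div r < q" using l2 r by (simp add: less_mult_imp_div_less mult.commute)
        have "((l1 mod r)*i + l1 div r) mod q = ((l1 mod r)*i + l2 div r) mod q" using l1 l2 e by simp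
        hence "l1 div r = l2 div r" using b1 b2
          by (smt (verit, ccfv_SIG) add.assoc add_left_cancel mod_less nat_mod_eq_iff)
        thus "l1 = l2" using e by (metis div_mult_mod_eq)
      qed simp
    next
      fix l assume "l \<in> {l. l < r*q \<and> x = ((l mod r)*i + l div r) mod q}"
      thus "l mod r \<in> {..<r}" using r by simp
    next
      fix a assume a: "a \<in> {..<r}"
      define b where "b = (x + q - (a*i) mod q) mod q"
      have bq: "b < q" using q by (simp add: b_def)
      have "(a*i + b) mod q = ((a*i) mod q + (x + q - (a*i) mod q)) mod q"
        by (simp add: b_def mod_add_eq mod_add_left_eq mod_add_right_eq)
      also have "\<dots> = (x + q) mod q" using q
        by (metis add.commute add_diff_inverse_nat mod_less_divisor not_less_iff_gr_or_eq trans_less_add2)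
      also have "\<dots> = x" using x by simp
      finally have eq: "(a*i + b) mod q = x" .
      have lt: "a + r*b < r*q"
      proof -
        have "a + r*b < r + r*b" using a by simp
        also have "\<dots> = r*(b+1)" by simp
        also have "\<dots> \<le> r*q" using bq by (intro mult_le_mono2) simp
        finally show ?thesis .
      qed
      show "\<exists>l\<in>{l. l < r*q \<and> x = ((l mod r)*i + l div r) mod q}. a = l mod r"
        using a lt eq by (intro bexI[of _ "a + r*b"]) auto
    qed
    hence "card {l. l < r*q \<and> x = ((l mod r)*i + l div r) mod q} = card {..<r::nat}"
      by (rule bij_betw_same_card)
    thus ?thesis using S by simp
  qed
  have deg2: "card {p. (p, l) \<in> ?I} = k" if l: "l \<in> {..<r*q}" for l
  proof -
    define a b where "a = l mod r" and "b = l div r"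
    have bq: "b < q" using l r by (simp add: b_def less_mult_imp_div_less mult.commute)
    have S: "{p. (p, l) \<in> ?I} = {p. p < k*q \<and> p div k = (a*(p mod k) + b) mod q}"
      using l by (auto simp: II_def a_def b_def mult.commute)
    have "bij_betw (\<lambda>p. p mod k) {p. p < k*q \<and> p div k = (a*(p mod k) + b) mod q} {..<k}"
    proof (rule bij_betwI')
      fix p1 p2 assume "p1 \<in> {p. p < k*q \<and> p div k = (a*(p mod k) + b) mod q}"
        "p2 \<in> {p. p < k*q \<and> p div k = (a*(p mod k) + b) mod q}"
      thus "(p1 mod k = p2 mod k) = (p1 = p2)" by (metis (mono_tags) div_mult_mod_eq mem_Collect_eq)
    next
      fix p assume "p \<in> {p. p < k*q \<and> p div k = (a*(p mod k) + b) mod q}"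
      thus "p mod k \<in> {..<k}" using k by simp
    next
      fix i assume i: "i \<in> {..<k}"
      define x where "x = (a*i + b) mod q"
      have xq: "x < q" using q by (simp add: x_def)
      have lt: "i + k*x < k*q"
      proof -
        have "i + k*x < k + k*x" using i by simp
        also have "\<dots> = k*(x+1)" by simp
        also have "\<dots> \<le> k*q" using xq by (intro mult_le_mono2) simp
        finally show ?thesis .
      qed
      have m: "(i + k*x) mod k = i" "(i + k*x) div k = x" using i by auto
      show "\<exists>p\<in>{p. p < k*q \<and> p div k = (a*(p mod k) + b) mod q}. i = p mod k"
        using lt m by (intro bexI[of _ "i + k*x"]) (auto simp: x_def)
    qed
    hence "card {p. p < k*q \<and> p div k = (a*(p mod k) + b) mod q} = card {..<k::nat}"
      by (rule bij_betw_same_card)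
    thus ?thesis using S by simp
  qed
  have n4: "no_4_cycle ?I"
    unfolding no_4_cycle_def
  proof clarify
    fix p1 p2 l1 l2
    assume ne: "p1 \<noteq> p2" "l1 \<noteq> l2" and h: "(p1, l1) \<in> ?I" "(p1, l2) \<in> ?I" "(p2, l1) \<in> ?I" "(p2, l2) \<in> ?I"
    have l1b: "l1 div r < q" "l2 div r < q" using h r
      by (auto simp: II_def less_mult_imp_div_less mult.commute)
    show False
    proof (cases "p1 mod k = p2 mod k")
      case True
      hence "p1 div k = p2 div k" using h by (simp add: II_def)
      thus False using True ne by (metis div_mult_mod_eq)
    next
      case False
      have "l1 mod r = l2 mod r \<and> l1 div r = l2 div r"
        apply (rule key[of _ r _ "p1 mod k" k "p2 mod k" _ q])
        using h l1b r k rk False by (auto simp: II_def)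
      thus False using ne by (metis div_mult_mod_eq)
    qed
  qed
  let ?R = "bip_adj ?I"
  have adj: "(Inl p, Inr l) \<in> ?R" "(Inr l, Inl p) \<in> ?R" if "(p,l) \<in> ?I" for p l
    using that by (auto simp: bip_adj_def)
  have symR: "sym ?R" unfolding sym_def bip_adj_def by blast
  have chain: "(Inl 0, Inl (k*x)) \<in> ?R\<^sup>*" if "x < q" for x
    using that
  proof (induction x)
    case 0 thus ?case by simp
  next
    case (Suc x)
    hence "q \<noteq> 1" by simp
    hence c2: "2 \<le> r" "2 \<le> k" using c by auto
    have xq: "x + 1 < q" using Suc by simp
    have l1: "1 + r*x < r*q"
    proof -
      have "1 + r*x < r + r*x" using c2 by simp
      also have "\<dots> = r*(x+1)" by simp
      also have "\<dots> \<le> r*q" using xq by (intro mult_le_mono2) simp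
      finally show ?thesis .
    qed
    have l2: "r*(x+1) < r*q" using xq r by (intro mult_strict_left_mono) auto
    have p0: "k*x < k*q" using xq k by simp
    have p1: "1 + k*(x+1) < k*q"
    proof -
      have "1 + k*(x+1) < k + k*(x+1)" using c2 by simp
      also have "\<dots> = k*(x+2)" by simp
      also have "\<dots> \<le> k*q" using xq by (intro mult_le_mono2) simp
      finally show ?thesis .
    qed
    have p2: "k*(x+1) < k*q" using xq k by (intro mult_strict_left_mono) auto
    have m1: "(1 + k*(x+1)) mod k = 1" "(1 + k*(x+1)) div k = x+1"
      using c2 by (simp_all only: mod_mult_self2 div_mult_self2) auto
    have m2: "(1 + r*x) mod r = 1" "(1 + r*x) div r = x" using c2 by (simp_all only: mod_mult_self2 div_mult_self2) auto
    have e1: "(k*x, 1 + r*x) \<in> ?I" using p0 l1 m2 xq k by (simp add: II_def)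
    have e2: "(1 + k*(x+1), 1 + r*x) \<in> ?I" using p1 l1 m1 m2 xq by (simp add: II_def)
    have e3: "(1 + k*(x+1), r*(x+1)) \<in> ?I" using p1 l2 m1 xq r by (simp add: II_def)
    have e4: "(k*(x+1), r*(x+1)) \<in> ?I" using p2 l2 xq r k by (simp add: II_def)
    have "(Inl (k*x), Inl (k*Suc x)) \<in> ?R\<^sup>*"
      using adj(1)[OF e1] adj(2)[OF e2] adj(1)[OF e3] adj(2)[OF e4]
      by (metis (no_types, lifting) Suc_eq_plus1 converse_rtrancl_into_rtrancl r_into_rtrancl)
    moreover have "(Inl 0, Inl (k*x)) \<in> ?R\<^sup>*" using Suc by simp
    ultimately show ?case by (meson rtrancl_trans)
  qed
  have reachP: "(Inl 0, Inl p) \<in> ?R\<^sup>*" if p: "p < k*q" for p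
  proof -
    define x where "x = p div k"
    have xq: "x < q" using p k by (simp add: x_def less_mult_imp_div_less mult.commute)
    have l: "r*x < r*q" using xq r by simp
    have p0: "k*x < k*q" using xq k by simp
    have e1: "(p, r*x) \<in> ?I" using p l xq r by (simp add: II_def x_def)
    have e2: "(k*x, r*x) \<in> ?I" using p0 l xq r k by (simp add: II_def)
    have "(Inl (k*x), Inl p) \<in> ?R\<^sup>*" using adj(1)[OF e2] adj(2)[OF e1]
      by (meson converse_rtrancl_into_rtrancl r_into_rtrancl)
    thus ?thesis using chain[OF xq] by (meson rtrancl_trans)
  qed
  have reachL: "(Inl 0, Inr l) \<in> ?R\<^sup>*" if l: "l < r*q" for l
  proof -
    define b where "b = l div r"
    have bq: "b < q" using l r by (simp add: b_def less_mult_imp_div_less mult.commute)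
    have p0: "k*b < k*q" using bq k by simp
    have e: "(k*b, l) \<in> ?I" using p0 l bq k by (simp add: II_def b_def)
    show ?thesis using reachP[OF p0] adj(1)[OF e] by (meson rtrancl.rtrancl_into_rtrancl)
  qed
  have reach: "(Inl 0, v) \<in> ?R\<^sup>*" if "v \<in> {..<k*q} <+> {..<r*q}" for v
    using that reachP reachL by auto
  have conn: "bip_connected {..<k*q} {..<r*q} ?I"
    unfolding bip_connected_def
  proof (intro ballI)
    fix v w assume v: "v \<in> {..<k*q} <+> {..<r*q}" and w: "w \<in> {..<k*q} <+> {..<r*q}"
    have "(v, Inl 0) \<in> ?R\<^sup>*" using reach[OF v] sym_rtrancl[OF symR] by (meson symD)
    thus "(v, w) \<in> ?R\<^sup>*" using reach[OF w] by (meson rtrancl_trans)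
  qed
  show ?thesis unfolding is_configuration_def
    using sub deg1 deg2 n4 conn by simp
qed

theorem lemma3:
  fixes r k :: nat
  assumes "0 < r" and "0 < k"
  shows "\<exists>d \<in> D_set r k. d \<noteq> 0"
proof -
  define q where "q = (if r = 1 \<or> k = 1 then 1 else r*k)"
  have q: "0 < q" using assms by (simp add: q_def)
  have rk: "(r-1)*(k-1) < q"
  proof (cases "r = 1 \<or> k = 1")
    case True thus ?thesis by (auto simp: q_def)
  next
    case False
    have "(r-1)*(k-1) < r*k" using assms by (simp add: mult_strict_mono)
    thus ?thesis using False by (simp add: q_def)
  qed
  have c: "q=1 \<or> (2\<le>r \<and> 2\<le>k)" using assms by (auto simp: q_def)
  define g where "g = gcd r k"
  have g: "0 < g" using assms by (simp add: g_def)
  define d where "d = q * g"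
  have "d * (k div g) = k*q" by (simp add: d_def g_def)
  moreover have "d * (r div g) = r*q" by (simp add: d_def g_def)
  ultimately have "d \<in> D_set r k"
    using conf[OF assms q rk c] by (auto simp: D_set_def configurable_def g_def)
  moreover have "d \<noteq> 0" using q g by (simp add: d_def)
  ultimately show ?thesis by blast
qed

end
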